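(* Let $y_t=\theta_t+Z_t$, $t=1,\dots,n$, where $Z_t$ are independent zero-mean $\sigma$-subgaussian random variables, let $\theta_0=y_0=0$, and let $\delta\in(0,1]$. For $1\le t_h\le t\le n$ define the online-averaging prediction $x_t^{t_h}=y_{t_h-1}$ if $t=t_h$ and $x_t^{t_h}=\bar y_{t_h:t-1}$ if $t>t_h$. Then with probability at least $1-\frac{\delta}{2}$, simultaneously for all $1\le t_h\le t_l\le n$, $$\sum_{t=t_h}^{t_l}(x_t^{t_h}-\theta_t)^2\le 4\sigma^2\log(4n^3/\delta)\big(2+\log(t_l-t_h+1)\big)+2(\theta_{t_h-1}-\theta_{t_h})^2+2\sum_{t=t_h+1}^{t_l}(\bar\theta_{t_h:t-1}-\theta_t)^2.$$
   Context: $\bar y_{a:b}$ and $\bar\theta_{a:b}$ denote the averages of $y_a,\dots,y_b$ and $\theta_a,\dots,\theta_b$ respectively. Logarithms are natural. *)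

theory Defs
  imports "HOL-Probability.Probability"
begin

definition subgaussian :: "'a measure \<Rightarrow> ('a \<Rightarrow> real) \<Rightarrow> real \<Rightarrow> bool" where
  "subgaussian M X \<sigma> \<longleftrightarrow>
     (\<forall>l::real. integrable M (\<lambda>\<omega>. exp (l * X \<omega>)) \<and>
        (\<integral>\<omega>. exp (l * X \<omega>) \<partial>M) \<le> exp (l\<^sup>2 * \<sigma>\<^sup>2 / 2))"

definition avg :: "(nat \<Rightarrow> real) \<Rightarrow> nat \<Rightarrow> nat \<Rightarrow> real" where
  "avg f a b = (\<Sum>i=a..b. f i) / real (b + 1 - a)"

definition obs :: "(nat \<Rightarrow> real) \<Rightarrow> (nat \<Rightarrow> 'a \<Rightarrow> real) \<Rightarrow> 'a \<Rightarrow> nat \<Rightarrow> real" where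
  "obs \<theta> Z \<omega> t = (if t = 0 then 0 else \<theta> t + Z t \<omega>)"

definition pred :: "(nat \<Rightarrow> real) \<Rightarrow> nat \<Rightarrow> nat \<Rightarrow> real" where
  "pred y th t = (if t = th then y (th - 1) else avg y th (t - 1))"

end

theory Submission imports Defs begin

lemma chernoff_ge:
  assumes P: "prob_space M" and S[measurable]: "S \<in> borel_measurable M"
    and mgf: "\<And>l. integrable M (\<lambda>\<omega>. exp (l * S \<omega>)) \<and> (\<integral>\<omega>. exp (l * S \<omega>) \<partial>M) \<le> exp (l\<^sup>2 * v / 2)"
    and v: "v \<ge> 0" and L: "L \<ge> 0" and d: "d > sqrt (2 * v * L)"
  shows "measure M {\<omega>\<in>space M. S \<omega> \<ge> d} \<le> exp (- L)"
proof -
  have dpos: "d > 0" using d by (metis le_less_trans real_sqrt_ge_zero v L mult_nonneg_nonneg zero_le_numeral mult_nonneg_nonneg)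
  obtain lam where lam: "lam \<ge> 0" "- lam * d + lam\<^sup>2 * v / 2 \<le> - L"
  proof (cases "v = 0")
    case True
    show ?thesis by (rule that[of "L / d"]) (use True L dpos in auto)
  next
    case False
    then have vp: "v > 0" using v by auto
    have "d\<^sup>2 > (sqrt (2 * v * L))\<^sup>2"
      using d by (intro power_strict_mono) (auto simp: L v)
    then have d2: "d\<^sup>2 > 2 * v * L" using L v by simp
    show ?thesis
    proof (rule that[of "d / v"])
      show "d / v \<ge> 0" using dpos vp by auto
      have "- (d / v) * d + (d / v)\<^sup>2 * v / 2 = - d\<^sup>2 / (2 * v)"
        using vp by (simp add: field_simps power2_eq_square)
      also have "\<dots> \<le> - L" using d2 vp by (simp add: field_simps)
      finally show "- (d / v) * d + (d / v)\<^sup>2 * v / 2 \<le> - L" .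
    qed
  qed
  have sub: "{\<omega>\<in>space M. S \<omega> \<ge> d} \<subseteq> {\<omega>\<in>space M. exp (lam * S \<omega>) \<ge> exp (lam * d)}"
    using lam(1) by (auto intro: mult_left_mono)
  have "measure M {\<omega>\<in>space M. S \<omega> \<ge> d} \<le> measure M {\<omega>\<in>space M. exp (lam * S \<omega>) \<ge> exp (lam * d)}"
    using sub P by (intro finite_measure.finite_measure_mono) (auto simp: prob_space_def)
  also have "\<dots> \<le> (\<integral>\<omega>. exp (lam * S \<omega>) \<partial>M) / exp (lam * d)"
    using mgf[of lam] by (intro integral_Markov_inequality_measure[where A="space M"]) auto
  also have "\<dots> \<le> exp (lam\<^sup>2 * v / 2) / exp (lam * d)"
    using mgf[of lam] by (simp add: divide_right_mono)
  also have "\<dots> = exp (- lam * d + lam\<^sup>2 * v / 2)" by (subst exp_diff[symmetric]) (simp add: algebra_simps)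
  also have "\<dots> \<le> exp (- L)" using lam(2) by simp
  finally show ?thesis .
qed

lemma chernoff_gt:
  assumes P: "prob_space M" and S[measurable]: "S \<in> borel_measurable M"
    and mgf: "\<And>l. integrable M (\<lambda>\<omega>. exp (l * S \<omega>)) \<and> (\<integral>\<omega>. exp (l * S \<omega>) \<partial>M) \<le> exp (l\<^sup>2 * v / 2)"
    and v: "v \<ge> 0" and L: "L \<ge> 0"
  shows "measure M {\<omega>\<in>space M. S \<omega> > sqrt (2 * v * L)} \<le> exp (- L)"
proof -
  let ?c = "sqrt (2 * v * L)"
  define A where "A k = {\<omega>\<in>space M. S \<omega> \<ge> ?c + 1 / real (Suc k)}" for k
  interpret finite_measure M using P by (simp add: prob_space_def)
  have "(\<lambda>k. measure M (A k)) \<longlonglongrightarrow> measure M (\<Union>k. A k)"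
  proof (rule finite_Lim_measure_incseq)
    show "range A \<subseteq> sets M" unfolding A_def by auto
    show "incseq A" unfolding incseq_def A_def
    proof (intro allI impI subsetI)
      fix m n x assume "m \<le> n" "x \<in> {\<omega> \<in> space M. ?c + 1 / real (Suc m) \<le> S \<omega>}"
      moreover have "1 / real (Suc n) \<le> 1 / real (Suc m)" using \<open>m \<le> n\<close> by (simp add: frac_le)
      ultimately show "x \<in> {\<omega> \<in> space M. ?c + 1 / real (Suc n) \<le> S \<omega>}" by auto
    qed
  qed
  moreover have "(\<Union>k. A k) = {\<omega>\<in>space M. S \<omega> > ?c}"
  proof (intro equalityI subsetI)
    fix x assume "x \<in> (\<Union>k. A k)" then show "x \<in> {\<omega>\<in>space M. S \<omega> > ?c}"
    proof -
      from \<open>x \<in> (\<Union>k. A k)\<close> obtain k where "x \<in> space M" "?c + 1 / real (Suc k) \<le> S x" unfolding A_def by auto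
      moreover have "1 / real (Suc k) > 0" by simp
      ultimately have "?c < S x" "x \<in> space M" by linarith+
      then show ?thesis by auto
    qed
  next
    fix x assume x: "x \<in> {\<omega>\<in>space M. S \<omega> > ?c}"
    then obtain k where "1 / real (Suc k) < S x - ?c"
      using reals_Archimedean[of "S x - ?c"] by (auto simp: inverse_eq_divide)
    then have "?c + 1 / real (Suc k) \<le> S x" by linarith
    then show "x \<in> (\<Union>k. A k)" using x unfolding A_def by blast
  qed
  moreover have "measure M (A k) \<le> exp (- L)" for k
    unfolding A_def by (rule chernoff_ge[OF P S mgf v L]) auto
  ultimately show ?thesis by (metis (no_types, lifting) LIMSEQ_le_const2)
qed

lemma mgf_sum:
  assumes P: "prob_space M" and ind: "prob_space.indep_vars M (\<lambda>_. borel) Z I"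
    and fin: "finite I" and sg: "\<And>t. t \<in> I \<Longrightarrow> subgaussian M (Z t) \<sigma>"
  shows "integrable M (\<lambda>\<omega>. exp (l * (\<Sum>i\<in>I. Z i \<omega>))) \<and>
         (\<integral>\<omega>. exp (l * (\<Sum>i\<in>I. Z i \<omega>)) \<partial>M) \<le> exp (l\<^sup>2 * (real (card I) * \<sigma>\<^sup>2) / 2)"
proof -
  interpret prob_space M by (rule P)
  have eq: "exp (l * (\<Sum>i\<in>I. Z i \<omega>)) = (\<Prod>i\<in>I. exp (l * Z i \<omega>))" for \<omega>
    by (simp add: sum_distrib_left exp_sum fin)
  have ind2: "indep_vars (\<lambda>_. borel) (\<lambda>i \<omega>. exp (l * Z i \<omega>)) I"
    by (rule indep_vars_compose2[OF ind]) auto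
  have int: "\<And>i. i \<in> I \<Longrightarrow> integrable M (\<lambda>\<omega>. exp (l * Z i \<omega>))"
    using sg unfolding subgaussian_def by blast
  have "integrable M (\<lambda>\<omega>. \<Prod>i\<in>I. exp (l * Z i \<omega>))"
    by (rule indep_vars_integrable[OF fin ind2 int])
  moreover have "(\<integral>\<omega>. (\<Prod>i\<in>I. exp (l * Z i \<omega>)) \<partial>M) = (\<Prod>i\<in>I. \<integral>\<omega>. exp (l * Z i \<omega>) \<partial>M)"
    by (rule indep_vars_lebesgue_integral[OF fin ind2 int])
  moreover have "(\<Prod>i\<in>I. \<integral>\<omega>. exp (l * Z i \<omega>) \<partial>M) \<le> (\<Prod>i\<in>I. exp (l\<^sup>2 * \<sigma>\<^sup>2 / 2))"
  proof (rule prod_mono)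
    fix i assume "i \<in> I"
    then show "0 \<le> (\<integral>\<omega>. exp (l * Z i \<omega>) \<partial>M) \<and> (\<integral>\<omega>. exp (l * Z i \<omega>) \<partial>M) \<le> exp (l\<^sup>2 * \<sigma>\<^sup>2 / 2)"
      using sg[of i] unfolding subgaussian_def by (auto intro: integral_nonneg)
  qed
  moreover have "(\<Prod>i\<in>I. exp (l\<^sup>2 * \<sigma>\<^sup>2 / 2)) = exp (l\<^sup>2 * (real (card I) * \<sigma>\<^sup>2) / 2)"
    by (simp add: exp_of_nat_mult[symmetric] algebra_simps)
  ultimately show ?thesis by (simp add: eq)
qed

lemma sq_gt_iff:
  fixes c x :: real assumes "c \<ge> 0"
  shows "(x\<^sup>2 > c\<^sup>2) \<longleftrightarrow> (x > c \<or> - x > c)"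
proof -
  have "(x\<^sup>2 > c\<^sup>2) \<longleftrightarrow> \<not> (x\<^sup>2 \<le> c\<^sup>2)" by auto
  also have "\<dots> \<longleftrightarrow> \<not> (\<bar>x\<bar> \<le> \<bar>c\<bar>)" by (simp add: abs_le_square_iff)
  finally show ?thesis using assms by auto
qed

lemma bad_pair:
  assumes P: "prob_space M" and ind: "prob_space.indep_vars M (\<lambda>_. borel) Z I"
    and J: "J \<subseteq> I" "finite J" and sg: "\<And>t. t \<in> I \<Longrightarrow> subgaussian M (Z t) \<sigma>"
    and L: "L \<ge> 0"
  shows "{\<omega>\<in>space M. (\<Sum>i\<in>J. Z i \<omega>)\<^sup>2 > 2 * (real (card J) * \<sigma>\<^sup>2) * L} \<in> sets M"
    and "measure M {\<omega>\<in>space M. (\<Sum>i\<in>J. Z i \<omega>)\<^sup>2 > 2 * (real (card J) * \<sigma>\<^sup>2) * L} \<le> 2 * exp (- L)"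
proof -
  interpret prob_space M by (rule P)
  have indJ: "indep_vars (\<lambda>_. borel) Z J" using indep_vars_subset[OF ind J(1)] .
  have meas[measurable]: "Z i \<in> borel_measurable M" if "i \<in> J" for i
    using indJ that unfolding indep_vars_def by auto
  let ?S = "\<lambda>\<omega>. \<Sum>i\<in>J. Z i \<omega>"
  let ?v = "real (card J) * \<sigma>\<^sup>2"
  let ?c = "sqrt (2 * ?v * L)"
  have Sm[measurable]: "?S \<in> borel_measurable M" by (intro borel_measurable_sum meas)
  have mS: "integrable M (\<lambda>\<omega>. exp (l * ?S \<omega>)) \<and> (\<integral>\<omega>. exp (l * ?S \<omega>) \<partial>M) \<le> exp (l\<^sup>2 * ?v / 2)" for l
    by (rule mgf_sum[OF P indJ J(2)]) (use sg J in auto)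
  have mS': "integrable M (\<lambda>\<omega>. exp (l * (- ?S \<omega>))) \<and> (\<integral>\<omega>. exp (l * (- ?S \<omega>)) \<partial>M) \<le> exp (l\<^sup>2 * ?v / 2)" for l
    using mS[of "-l"] by simp
  have v: "?v \<ge> 0" by simp
  have c2: "?c\<^sup>2 = 2 * ?v * L" using v L by simp
  have c0: "?c \<ge> 0" using v L by simp
  have seteq: "{\<omega>\<in>space M. (?S \<omega>)\<^sup>2 > 2 * ?v * L} = {\<omega>\<in>space M. ?S \<omega> > ?c} \<union> {\<omega>\<in>space M. - ?S \<omega> > ?c}"
  proof -
    have "(x\<^sup>2 > ?c\<^sup>2) \<longleftrightarrow> (x > ?c \<or> - x > ?c)" for x :: real
      using c0 by (rule sq_gt_iff)
    then show ?thesis unfolding c2 by auto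
  qed
  show "{\<omega>\<in>space M. (?S \<omega>)\<^sup>2 > 2 * ?v * L} \<in> sets M" by measurable
  have "measure M {\<omega>\<in>space M. (?S \<omega>)\<^sup>2 > 2 * ?v * L}
      \<le> measure M {\<omega>\<in>space M. ?S \<omega> > ?c} + measure M {\<omega>\<in>space M. - ?S \<omega> > ?c}"
    unfolding seteq by (rule measure_Un_le) auto
  also have "\<dots> \<le> exp (- L) + exp (- L)"
    using chernoff_gt[OF P Sm mS v L] chernoff_gt[OF P _ mS' v L] by (intro add_mono) auto
  finally show "measure M {\<omega>\<in>space M. (?S \<omega>)\<^sup>2 > 2 * ?v * L} \<le> 2 * exp (- L)" by simp
qed

lemma sq_sum_le: "((u::real) + v)\<^sup>2 \<le> 2 * u\<^sup>2 + 2 * v\<^sup>2"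
proof -
  have "0 \<le> (u - v)\<^sup>2" by simp
  then show ?thesis by (simp add: power2_eq_square algebra_simps)
qed

lemma inv_le_ln_diff:
  assumes "m \<ge> (1::nat)"
  shows "1 / real (Suc m) \<le> ln (real (Suc m)) - ln (real m)"
proof -
  have mp: "real m > 0" using assms by simp
  have "ln (real m / real (Suc m)) \<le> real m / real (Suc m) - 1"
    using mp by (intro ln_le_minus_one) auto
  also have "\<dots> = - (1 / real (Suc m))" by (simp add: field_simps)
  finally show ?thesis using mp by (simp add: ln_div)
qed

lemma harm_bound:
  assumes "m \<ge> (1::nat)"
  shows "(\<Sum>t=th+1..th+m. 1 / real (t - th)) \<le> 1 + ln (real m)"
  using assms
proof (induction m rule: nat_induct_at_least)
  case base
  then show ?case by simp
next
  case (Suc m)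
  have "(\<Sum>t=th+1..th+Suc m. 1 / real (t - th)) = (\<Sum>t=th+1..th+m. 1 / real (t - th)) + 1 / real (Suc m)"
    by simp
  also have "\<dots> \<le> 1 + ln (real m) + (ln (real (Suc m)) - ln (real m))"
    using Suc.IH inv_le_ln_diff[OF Suc.hyps] by linarith
  finally show ?case by simp
qed

lemma harm_bound2:
  fixes th tl :: nat
  assumes "th \<le> tl"
  shows "(\<Sum>t=th+1..tl. 1 / real (t - th)) \<le> 1 + ln (real (tl - th + 1))"
proof (cases "tl = th")
  case True then show ?thesis by simp
next
  case False
  then have m: "tl - th \<ge> 1" and tl: "tl = th + (tl - th)" using assms by auto
  have "(\<Sum>t=th+1..tl. 1 / real (t - th)) \<le> 1 + ln (real (tl - th))"
    using harm_bound[OF m, of th] tl by metis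
  also have "\<dots> \<le> 1 + ln (real (tl - th + 1))" using m by simp
  finally show ?thesis .
qed

lemma det:
  fixes z \<theta> :: "nat \<Rightarrow> real" and th tl :: nat
  assumes good: "\<And>a b. 1 \<le> a \<Longrightarrow> a \<le> b \<Longrightarrow> b \<le> n \<Longrightarrow> (\<Sum>i=a..b. z i)\<^sup>2 \<le> 2 * (real (card {a..b}) * \<sigma>\<^sup>2) * L"
    and L: "L \<ge> 0" and th0: "\<theta> 0 = 0" and th: "1 \<le> th" "th \<le> tl" "tl \<le> n"
  shows "(\<Sum>t=th..tl. (pred (\<lambda>t. if t = 0 then 0 else \<theta> t + z t) th t - \<theta> t)\<^sup>2)
    \<le> 4 * \<sigma>\<^sup>2 * L * (2 + ln (real (tl - th + 1))) + 2 * (\<theta> (th - 1) - \<theta> th)\<^sup>2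
      + 2 * (\<Sum>t=th+1..tl. (avg \<theta> th (t - 1) - \<theta> t)\<^sup>2)"
proof -
  define y where "y = (\<lambda>t. if t = 0 then 0 else \<theta> t + z t)"
  define K where "K = \<sigma>\<^sup>2 * L"
  have K: "K \<ge> 0" using L unfolding K_def by simp
  have h1: "(pred y th th - \<theta> th)\<^sup>2 \<le> 2 * (\<theta> (th - 1) - \<theta> th)\<^sup>2 + 4 * K"
  proof (cases "th = 1")
    case True
    then have "(pred y th th - \<theta> th)\<^sup>2 = (\<theta> (th - 1) - \<theta> th)\<^sup>2"
      by (simp add: pred_def y_def th0)
    moreover have "(\<theta> (th - 1) - \<theta> th)\<^sup>2 \<ge> 0" by simp
    ultimately show ?thesis using K by linarith
  next
    case False
    then have e: "pred y th th - \<theta> th = (\<theta> (th - 1) - \<theta> th) + z (th - 1)"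
      using th by (simp add: pred_def y_def)
    have "(z (th - 1))\<^sup>2 \<le> 2 * K"
      using good[of "th - 1" "th - 1"] False th by (simp add: K_def mult.assoc)
    then show ?thesis unfolding e using sq_sum_le[of "\<theta> (th - 1) - \<theta> th" "z (th - 1)"] by linarith
  qed
  have h2: "(pred y th t - \<theta> t)\<^sup>2 \<le> 2 * (avg \<theta> th (t - 1) - \<theta> t)\<^sup>2 + 4 * K * (1 / real (t - th))"
    if t: "t \<in> {th+1..tl}" for t
  proof -
    define S where "S = (\<Sum>i=th..t-1. z i)"
    define m where "m = real (t - th)"
    have mp: "m > 0" using t unfolding m_def by auto
    have c: "real (t - 1 + 1 - th) = m" using t unfolding m_def by auto
    have ysum: "(\<Sum>i=th..t-1. y i) = (\<Sum>i=th..t-1. \<theta> i) + S"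
      unfolding S_def y_def sum.distrib[symmetric] using th by (intro sum.cong) auto
    have e: "pred y th t - \<theta> t = (avg \<theta> th (t - 1) - \<theta> t) + S / m"
      using t unfolding pred_def avg_def c ysum by (auto simp: add_divide_distrib)
    have "S\<^sup>2 \<le> 2 * (m * \<sigma>\<^sup>2) * L"
      using good[of th "t - 1"] t th unfolding S_def m_def by auto
    then have "S\<^sup>2 \<le> 2 * m * K" by (simp add: K_def algebra_simps)
    then have "(S / m)\<^sup>2 \<le> 2 * K * (1 / m)"
      using mp by (simp add: power_divide field_simps power2_eq_square)
    then show ?thesis unfolding e m_def[symmetric]
      using sq_sum_le[of "avg \<theta> th (t - 1) - \<theta> t" "S / m"] by linarith
  qed
  have "(\<Sum>t=th..tl. (pred y th t - \<theta> t)\<^sup>2) = (pred y th th - \<theta> th)\<^sup>2 + (\<Sum>t=th+1..tl. (pred y th t - \<theta> t)\<^sup>2)"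
    using th by (simp add: sum.atLeast_Suc_atMost)
  also have "\<dots> \<le> (2 * (\<theta> (th - 1) - \<theta> th)\<^sup>2 + 4 * K) + (\<Sum>t=th+1..tl. 2 * (avg \<theta> th (t - 1) - \<theta> t)\<^sup>2 + 4 * K * (1 / real (t - th)))"
    using h1 h2 by (intro add_mono sum_mono) auto
  also have "\<dots> = 2 * (\<theta> (th - 1) - \<theta> th)\<^sup>2 + 4 * K + 2 * (\<Sum>t=th+1..tl. (avg \<theta> th (t - 1) - \<theta> t)\<^sup>2) + 4 * K * (\<Sum>t=th+1..tl. 1 / real (t - th))"
    by (simp add: sum.distrib sum_distrib_left)
  also have "\<dots> \<le> 2 * (\<theta> (th - 1) - \<theta> th)\<^sup>2 + 4 * K + 2 * (\<Sum>t=th+1..tl. (avg \<theta> th (t - 1) - \<theta> t)\<^sup>2) + 4 * K * (1 + ln (real (tl - th + 1)))"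
    using harm_bound2[OF th(2)] K by (intro add_left_mono mult_left_mono) auto
  also have "\<dots> = 4 * \<sigma>\<^sup>2 * L * (2 + ln (real (tl - th + 1))) + 2 * (\<theta> (th - 1) - \<theta> th)\<^sup>2
      + 2 * (\<Sum>t=th+1..tl. (avg \<theta> th (t - 1) - \<theta> t)\<^sup>2)"
    by (simp add: K_def algebra_simps)
  finally show ?thesis unfolding y_def .
qed

theorem lemma7:
  fixes M :: "'a measure" and Z :: "nat \<Rightarrow> 'a \<Rightarrow> real" and \<theta> :: "nat \<Rightarrow> real"
    and \<sigma> \<delta> :: real and n :: nat
  assumes "prob_space M"
    and "prob_space.indep_vars M (\<lambda>_. borel) Z {1..n}"
    and "\<And>t. t \<in> {1..n} \<Longrightarrow> integrable M (Z t) \<and> (\<integral>\<omega>. Z t \<omega> \<partial>M) = 0"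
    and "\<And>t. t \<in> {1..n} \<Longrightarrow> subgaussian M (Z t) \<sigma>"
    and "\<theta> 0 = 0"
    and "0 < \<delta>" and "\<delta> \<le> 1"
  shows "measure M {\<omega> \<in> space M. \<forall>th tl. 1 \<le> th \<and> th \<le> tl \<and> tl \<le> n \<longrightarrow>
            (\<Sum>t=th..tl. (pred (obs \<theta> Z \<omega>) th t - \<theta> t)\<^sup>2)
            \<le> 4 * \<sigma>\<^sup>2 * ln (4 * real n ^ 3 / \<delta>) * (2 + ln (real (tl - th + 1)))
              + 2 * (\<theta> (th - 1) - \<theta> th)\<^sup>2
              + 2 * (\<Sum>t=th+1..tl. (avg \<theta> th (t - 1) - \<theta> t)\<^sup>2)}
         \<ge> 1 - \<delta> / 2" (is "measure M ?T \<ge> _")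
proof -
  interpret prob_space M by (rule assms(1))
  define L where "L = ln (4 * real n ^ 3 / \<delta>)"
  have L0: "L \<ge> 0"
  proof (cases "n = 0")
    case True then show ?thesis by (simp add: L_def)
  next
    case False
    then have "real n ^ 3 \<ge> 1" by simp
    then have "4 * real n ^ 3 / \<delta> \<ge> 1" using assms(6,7) by (simp add: field_simps)
    then show ?thesis unfolding L_def by simp
  qed
  define Pairs where "Pairs = {p::nat\<times>nat. 1 \<le> fst p \<and> fst p \<le> snd p \<and> snd p \<le> n}"
  have Psub: "Pairs \<subseteq> {1..n} \<times> {1..n}" unfolding Pairs_def by auto
  have Pfin: "finite Pairs" using Psub finite_subset by blast
  have Pcard: "card Pairs \<le> n * n"
    using card_mono[OF _ Psub] by (simp add: card_cartesian_product)
  define Bad where "Bad p = {\<omega>\<in>space M. (\<Sum>i\<in>{fst p..snd p}. Z i \<omega>)\<^sup>2 > 2 * (real (card {fst p..snd p}) * \<sigma>\<^sup>2) * L}" for p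
  have Jsub: "{fst p..snd p} \<subseteq> {1..n}" if "p \<in> Pairs" for p using that unfolding Pairs_def by auto
  have Bad_sets: "Bad p \<in> sets M" if "p \<in> Pairs" for p
    unfolding Bad_def by (rule bad_pair(1)[OF assms(1) assms(2) Jsub[OF that] _ assms(4) L0]) auto
  have Bad_meas: "measure M (Bad p) \<le> 2 * exp (- L)" if "p \<in> Pairs" for p
    unfolding Bad_def by (rule bad_pair(2)[OF assms(1) assms(2) Jsub[OF that] _ assms(4) L0]) auto
  define B where "B = (\<Union>p\<in>Pairs. Bad p)"
  have Bsets: "B \<in> sets M" unfolding B_def using Pfin Bad_sets by auto
  have "measure M B \<le> (\<Sum>p\<in>Pairs. measure M (Bad p))"
    unfolding B_def by (rule measure_UNION_le[OF Pfin Bad_sets])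
  also have "\<dots> \<le> (\<Sum>p\<in>Pairs. 2 * exp (- L))" by (rule sum_mono) (rule Bad_meas)
  also have "\<dots> = real (card Pairs) * (2 * exp (- L))" by simp
  also have "\<dots> \<le> \<delta> / 2"
  proof (cases "n = 0")
    case True
    then have "Pairs = {}" unfolding Pairs_def by auto
    then show ?thesis using assms(6) by simp
  next
    case False
    have pos: "4 * real n ^ 3 / \<delta> > 0" using False assms(6) by simp
    have e: "exp (- L) = \<delta> / (4 * real n ^ 3)"
      unfolding L_def using pos by (simp add: exp_minus)
    have "real (card Pairs) \<le> real n * real n" using Pcard by (metis of_nat_le_iff of_nat_mult)
    then have "real (card Pairs) * (2 * exp (- L)) \<le> real n * real n * (2 * (\<delta> / (4 * real n ^ 3)))"
      unfolding e using assms(6) by (intro mult_right_mono) auto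
    also have "\<dots> = \<delta> / (2 * real n)" using False by (simp add: field_simps power3_eq_cube)
    also have "\<dots> \<le> \<delta> / 2" using False assms(6) by (intro divide_left_mono) auto
    finally show ?thesis .
  qed
  finally have mB: "measure M B \<le> \<delta> / 2" .
  define R where "R th tl = 4 * \<sigma>\<^sup>2 * ln (4 * real n ^ 3 / \<delta>) * (2 + ln (real (tl - th + 1)))
              + 2 * (\<theta> (th - 1) - \<theta> th)\<^sup>2 + 2 * (\<Sum>t=th+1..tl. (avg \<theta> th (t - 1) - \<theta> t)\<^sup>2)" for th tl :: nat
  define F where "F th tl \<omega> = (\<Sum>t=th..tl. (pred (obs \<theta> Z \<omega>) th t - \<theta> t)\<^sup>2)" for th tl :: nat and \<omega>
  define Z' where "Z' i = (if i \<in> {1..n} then Z i else (\<lambda>_. 0))" for i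
  define F' where "F' th tl \<omega> = (\<Sum>t=th..tl. (pred (obs \<theta> Z' \<omega>) th t - \<theta> t)\<^sup>2)" for th tl :: nat and \<omega>
  have Zm: "Z i \<in> borel_measurable M" if "i \<in> {1..n}" for i
    using assms(2) that unfolding indep_vars_def by auto
  have Z'm[measurable]: "Z' i \<in> borel_measurable M" for i
    unfolding Z'_def using Zm by auto
  have F'm[measurable]: "F' th tl \<in> borel_measurable M" for th tl
    unfolding F'_def pred_def avg_def obs_def by measurable
  have obseq: "obs \<theta> Z \<omega> i = obs \<theta> Z' \<omega> i" if "i \<le> n" for i \<omega>
    using that unfolding obs_def Z'_def by auto
  have predeq: "pred (obs \<theta> Z \<omega>) th t = pred (obs \<theta> Z' \<omega>) th t" if "th \<le> t" "t \<le> n" for th t \<omega>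
    using that unfolding pred_def avg_def by (auto simp: obseq intro!: sum.cong)
  have FF': "F th tl \<omega> = F' th tl \<omega>" if "tl \<le> n" for th tl \<omega>
    unfolding F_def F'_def using that by (intro sum.cong) (auto simp: predeq)
  have Teq: "?T = space M - (\<Union>p\<in>Pairs. {\<omega>\<in>space M. \<not> F' (fst p) (snd p) \<omega> \<le> R (fst p) (snd p)})"
  proof -
    have "?T = {\<omega>\<in>space M. \<forall>th tl. 1 \<le> th \<and> th \<le> tl \<and> tl \<le> n \<longrightarrow> F th tl \<omega> \<le> R th tl}"
      by (simp only: F_def R_def)
    also have "\<dots> = space M - (\<Union>p\<in>Pairs. {\<omega>\<in>space M. \<not> F' (fst p) (snd p) \<omega> \<le> R (fst p) (snd p)})"
      unfolding Pairs_def by (auto simp: FF')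
    finally show ?thesis .
  qed
  have Tsets: "?T \<in> sets M"
    unfolding Teq using Pfin by (intro sets.Diff sets.finite_UN) auto
  have sub: "space M - B \<subseteq> ?T"
  proof
    fix \<omega> assume w: "\<omega> \<in> space M - B"
    have good: "(\<Sum>i=a..b. Z i \<omega>)\<^sup>2 \<le> 2 * (real (card {a..b}) * \<sigma>\<^sup>2) * L"
      if "1 \<le> a" "a \<le> b" "b \<le> n" for a b
    proof -
      have "(a, b) \<in> Pairs" using that unfolding Pairs_def by auto
      then have "\<omega> \<notin> Bad (a, b)" using w unfolding B_def by auto
      then show ?thesis using w unfolding Bad_def by auto
    qed
    have oeq: "obs \<theta> Z \<omega> = (\<lambda>t. if t = 0 then 0 else \<theta> t + Z t \<omega>)"
      by (auto simp: obs_def)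
    show "\<omega> \<in> ?T"
      using w det[of n "\<lambda>i. Z i \<omega>" \<sigma> L \<theta>, OF good L0 assms(5)]
      unfolding L_def by (auto simp: oeq)
  qed
  have "1 - \<delta> / 2 \<le> 1 - measure M B" using mB by simp
  also have "\<dots> = measure M (space M - B)" using prob_compl[OF Bsets] by simp
  also have "\<dots> \<le> measure M ?T" by (rule finite_measure_mono[OF sub Tsets])
  finally show ?thesis .
qed

end
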